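(* For integers $0\le j\le n$, $$\sum_{i=j}^n\binom{2n}{2i}B_{2n-2i}{i\brack j}=\begin{cases}0,& j<n,\\ n,& j=n.\end{cases}$$
   Context: $B_n$ is the $n$th Bernoulli number, $\frac{t}{e^t-1}=\sum_{n\ge0}B_n\frac{t^n}{n!}$. The Euler polynomials $E_n(x)$ are defined by $\frac{2e^{xt}}{e^t+1}=\sum_{n\ge0}E_n(x)\frac{t^n}{n!}$. For integers $N\ge0$, the numbers ${N\brack j}$ are defined by $\sum_{j=1}^N{N\brack j}x^{2j-1}=x^{2N}-E_{2N}(x)$ (i.e. they are the negatives of the odd-degree coefficients of $E_{2N}$), with ${N\brack j}=0$ for $j\le0$ or $j>N$. *)

theory Defs
  imports "HOL-Computational_Algebra.Computational_Algebra"
begin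

definition bernoulli_num :: "nat \<Rightarrow> real" where
  "bernoulli_num n = fact n * fps_nth (fps_X / (fps_exp 1 - 1)) n"

definition euler_val :: "nat \<Rightarrow> real \<Rightarrow> real" where
  "euler_val n x = fact n * fps_nth (fps_const 2 * fps_exp x / (fps_exp 1 + 1)) n"

definition euler_poly :: "nat \<Rightarrow> real poly" where
  "euler_poly n = (THE p. \<forall>x. poly p x = euler_val n x)"

definition ebrack :: "nat \<Rightarrow> int \<Rightarrow> real" where
  "ebrack N j = (if 1 \<le> j \<and> j \<le> int N
                 then - coeff (euler_poly (2 * N)) (nat (2 * j - 1)) else 0)"

end

theory Submission imports Defs begin

definition BB :: "real fps" where "BB = fps_X / (fps_exp 1 - 1)"
definition UU :: "real fps" where "UU = fps_const 2 / (fps_exp 1 + 1)"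

lemma E1m1_nz: "(fps_exp (1::real) - 1) \<noteq> 0"
proof
  assume "fps_exp (1::real) - 1 = 0"
  hence "(fps_exp (1::real) - 1) $ 1 = 0" by simp
  thus False by simp
qed

lemma E1p1_nz: "(fps_exp (1::real) + 1) \<noteq> 0"
proof
  assume "fps_exp (1::real) + 1 = 0"
  hence "(fps_exp (1::real) + 1) $ 0 = 0" by simp
  thus False by simp
qed

lemma BB_eq: "BB * (fps_exp 1 - 1) = fps_X"
proof -
  have "subdegree (fps_exp (1::real) - 1) = 1"
    by (rule subdegreeI) auto
  thus ?thesis unfolding BB_def
    by (intro fps_times_divide_eq E1m1_nz) simp
qed

lemma UU_eq: "UU * (fps_exp 1 + 1) = 2"
proof -
  have "UU * (fps_exp 1 + 1) = fps_const 2 * (inverse (fps_exp 1 + 1) * (fps_exp 1 + 1))"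
    unfolding UU_def by (subst fps_divide_unit) (simp_all add: mult.assoc)
  also have "\<dots> = 2" by (subst inverse_mult_eq_1) (simp_all add: numeral_fps_const)
  finally show ?thesis .
qed

definition fneg :: "real fps \<Rightarrow> real fps" where
  "fneg f = Abs_fps (\<lambda>n. (-1)^n * f $ n)"

lemma fneg_nth[simp]: "fneg f $ n = (-1)^n * f $ n" by (simp add: fneg_def)

lemma fneg_mult: "fneg (f * g) = fneg f * fneg g"
proof (rule fps_ext)
  fix n
  have "fneg (f*g) $ n = (\<Sum>i=0..n. (-1)^i * f$i * ((-1)^(n-i) * g$(n-i)))"
    unfolding fneg_nth fps_mult_nth sum_distrib_left
  proof (rule sum.cong)
    fix i assume "i \<in> {0..n}"
    hence "(-1::real)^n = (-1)^i * (-1)^(n-i)" by (simp add: power_add[symmetric])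
    thus "(-1)^n * (f $ i * g $ (n - i)) = (-1)^i * f$i * ((-1)^(n-i) * g$(n-i))" by simp
  qed simp
  thus "fneg (f*g) $ n = (fneg f * fneg g) $ n" by (simp add: fps_mult_nth)
qed

lemma fneg_add: "fneg (f + g) = fneg f + fneg g"
  by (rule fps_ext) (simp add: algebra_simps)

lemma fneg_exp: "fneg (fps_exp a) = fps_exp (-a)"
  proof (rule fps_ext)
  fix n
  have "(-a)^n = (-1)^n * (a::real)^n" by (rule power_minus)
  thus "fneg (fps_exp a) $ n = fps_exp (-a) $ n" by simp
qed

lemma fneg_1: "fneg 1 = 1"
  by (rule fps_ext) simp

lemma fneg_2: "fneg 2 = 2"
  by (rule fps_ext) (simp add: numeral_fps_const)

lemma UU_sym: "UU + fneg UU = 2"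
proof -
  have "fneg (UU * (fps_exp 1 + 1)) = 2" using UU_eq fneg_2 by simp
  hence a: "fneg UU * (fps_exp (-1) + 1) = 2" by (simp add: fneg_mult fneg_add fneg_exp fneg_1)
  have ee: "fps_exp (-1) * fps_exp 1 = (1::real fps)"
    by (simp add: fps_exp_add_mult[symmetric])
  have ee': "fps_exp 1 * fps_exp (-1) = (1::real fps)"
    using ee by (simp add: mult.commute)
  have "fneg UU * (1 + fps_exp 1) = 2 * fps_exp 1"
  proof -
    have "fneg UU * (1 + fps_exp 1) = fneg UU * (fps_exp (-1) + 1) * fps_exp 1"
      by (simp add: algebra_simps ee ee')
    thus ?thesis using a by simp
  qed
  hence "(UU + fneg UU) * (fps_exp 1 + 1) = 2 * (fps_exp 1 + 1)"
    using UU_eq by (simp add: algebra_simps)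
  thus ?thesis unfolding mult_right_cancel[OF E1p1_nz] .
qed

lemma UU_even: "n \<noteq> 0 \<Longrightarrow> even n \<Longrightarrow> UU $ n = 0"
proof -
  assume "n \<noteq> 0" "even n"
  have "(UU + fneg UU) $ n = 2 $ n" using UU_sym by simp
  thus ?thesis using \<open>n \<noteq> 0\<close> \<open>even n\<close> by (simp add: numeral_fps_const)
qed

lemma UU_0: "UU $ 0 = 1"
  using arg_cong[OF UU_eq, of "\<lambda>f. f $ 0"] by (simp add: numeral_fps_const)

lemma D_eq: "2 * (BB * (UU - 1)) = - fps_X * UU"
proof -
  let ?P = "(fps_exp (1::real) - 1) * (fps_exp 1 + 1)"
  have nz: "?P \<noteq> 0" using E1m1_nz E1p1_nz by simp
  have "2 * (BB * (UU - 1)) * ?P = 2 * (BB * (fps_exp 1 - 1)) * (UU * (fps_exp 1 + 1) - (fps_exp 1 + 1))"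
    by (simp add: algebra_simps)
  also have "\<dots> = 2 * fps_X * (2 - (fps_exp 1 + 1))" by (simp add: BB_eq UU_eq)
  also have "\<dots> = - fps_X * 2 * (fps_exp 1 - 1)"
    by (simp add: algebra_simps)
  also have "\<dots> = - fps_X * (UU * (fps_exp 1 + 1)) * (fps_exp 1 - 1)"
    by (simp only: UU_eq)
  also have "\<dots> = (- fps_X * UU) * ?P" by (simp add: algebra_simps)
  finally show ?thesis unfolding mult_right_cancel[OF nz] .
qed

definition ep :: "nat \<Rightarrow> real poly" where
  "ep n = (\<Sum>d\<le>n. monom (real (n choose d) * fact (n-d) * UU$(n-d)) d)"

lemma euler_val_eq: "euler_val n x = fact n * (fps_exp x * UU) $ n"
proof -
  have "fps_const 2 * fps_exp x / (fps_exp 1 + 1) = fps_exp x * UU"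
    unfolding UU_def by (simp add: fps_divide_unit mult_ac)
  thus ?thesis unfolding euler_val_def by simp
qed

lemma poly_ep: "poly (ep n) x = euler_val n x"
proof -
  have "poly (ep n) x = (\<Sum>d\<le>n. real (n choose d) * fact (n-d) * UU$(n-d) * x^d)"
    unfolding ep_def poly_sum poly_monom ..
  also have "\<dots> = (\<Sum>d=0..n. fact n * (x^d / fact d * UU$(n-d)))"
    unfolding atMost_atLeast0
  proof (rule sum.cong)
    fix d assume "d \<in> {0..n}"
    hence "d \<le> n" by simp
    thus "real (n choose d) * fact (n-d) * UU$(n-d) * x^d = fact n * (x^d / fact d * UU$(n-d))"
      by (simp add: binomial_fact field_simps)
  qed simp
  also have "\<dots> = euler_val n x"
    unfolding euler_val_eq fps_mult_nth by (simp add: sum_distrib_left)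
  finally show ?thesis .
qed

lemma euler_poly_eq: "euler_poly n = ep n"
  unfolding euler_poly_def
proof (rule the_equality)
  show "\<forall>x. poly (ep n) x = euler_val n x" by (simp add: poly_ep)
next
  fix p assume "\<forall>x. poly p x = euler_val n x"
  hence "poly p = poly (ep n)" by (simp add: poly_ep fun_eq_iff)
  thus "p = ep n" by (simp add: poly_eq_poly_eq_iff)
qed

lemma coeff_ep: "d \<le> n \<Longrightarrow> coeff (ep n) d = real (n choose d) * fact (n-d) * UU$(n-d)"
  unfolding ep_def by (simp add: coeff_sum coeff_monom)

lemma odd_sum:
  fixes f :: "nat \<Rightarrow> real"
  assumes "\<And>l. f (2*l) = 0"
  shows "(\<Sum>i=0..2*N+1. f i) = (\<Sum>l=0..N. f (2*l+1))"
proof (induction N)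
  case 0
  then show ?case using assms[of 0] by simp
next
  case (Suc N)
  have "2 * Suc N + 1 = Suc (Suc (2*N+1))" by simp
  then show ?case using Suc assms[of "Suc N"] by (simp add: sum.atLeast0_atMost_Suc)
qed

lemma key_sum: "(\<Sum>l=0..N. UU$(2*l+1) * BB$(2*N-2*l)) = - UU$(2*N) / 2"
proof -
  have "(BB * (UU - 1)) $ (2*N+1) = (\<Sum>i=0..2*N+1. (UU-1)$i * BB$(2*N+1-i))"
    by (subst mult.commute) (rule fps_mult_nth)
  also have "\<dots> = (\<Sum>l=0..N. (UU-1)$(2*l+1) * BB$(2*N+1-(2*l+1)))"
  proof (rule odd_sum)
    fix l show "(UU - 1) $ (2 * l) * BB $ (2 * N + 1 - 2 * l) = 0"
      using UU_even[of "2*l"] UU_0 by (cases "l = 0") auto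
  qed
  also have "\<dots> = (\<Sum>l=0..N. UU$(2*l+1) * BB$(2*N-2*l))"
    by simp
  finally have a: "(BB * (UU - 1)) $ (2*N+1) = (\<Sum>l=0..N. UU$(2*l+1) * BB$(2*N-2*l))" .
  have "(2 * (BB * (UU - 1))) $ (2*N+1) = (- fps_X * UU) $ (2*N+1)" using D_eq by simp
  hence "2 * (BB * (UU - 1)) $ (2*N+1) = - UU $ (2*N)" by (simp add: numeral_fps_const)
  thus ?thesis using a by simp
qed

lemma bern_eq: "bernoulli_num m = fact m * BB $ m"
  unfolding bernoulli_num_def BB_def ..

lemma ebrack_eq:
  assumes "1 \<le> j" "j \<le> i"
  shows "ebrack i (int j) = - (real ((2*i) choose (2*j-1)) * fact (2*i-(2*j-1)) * UU$(2*i-(2*j-1)))"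
proof -
  have "nat (2 * int j - 1) = 2*j-1" using assms by simp
  moreover have "2*j-1 \<le> 2*i" using assms by simp
  ultimately show ?thesis using assms unfolding ebrack_def euler_poly_eq
    by (simp add: coeff_ep)
qed

lemma term_eq:
  assumes "1 \<le> j" "j \<le> i" "i \<le> n"
  shows "real ((2 * n) choose (2 * i)) * bernoulli_num (2 * n - 2 * i) * ebrack i (int j)
     = - (fact (2*n) / fact (2*j-1)) * (UU$(2*(i-j)+1) * BB$(2*(n-j) - 2*(i-j)))"
proof -
  have e1: "2*i-(2*j-1) = 2*(i-j)+1" using assms by simp
  have e2: "2*n-2*i = 2*(n-j) - 2*(i-j)" using assms by simp
  have c1: "real ((2 * n) choose (2 * i)) * fact (2*n-2*i) = fact (2*n) / fact (2*i)"
    using assms by (simp add: binomial_fact field_simps)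
  have c2: "real ((2*i) choose (2*j-1)) * fact (2*i-(2*j-1)) = fact (2*i) / fact (2*j-1)"
    using assms by (simp add: binomial_fact field_simps)
  have "real ((2 * n) choose (2 * i)) * bernoulli_num (2 * n - 2 * i) * ebrack i (int j)
      = - ((real ((2 * n) choose (2 * i)) * fact (2*n-2*i)) * (real ((2*i) choose (2*j-1)) * fact (2*i-(2*j-1))))
         * (UU$(2*i-(2*j-1)) * BB$(2*n-2*i))"
    using assms by (simp add: bern_eq ebrack_eq)
  also have "\<dots> = - (fact (2*n) / fact (2*j-1)) * (UU$(2*(i-j)+1) * BB$(2*(n-j) - 2*(i-j)))"
    by (simp only: c1 c2, simp only: e1 e2) simp
  finally show ?thesis .
qed

theorem lemma5p2:
  fixes n j :: nat
  assumes "j \<le> n"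
  shows "(\<Sum>i = j..n. real ((2 * n) choose (2 * i)) * bernoulli_num (2 * n - 2 * i)
            * ebrack i (int j)) = (if j < n then 0 else real n)"
proof (cases "j = 0")
  case True
  thus ?thesis using assms by (simp add: ebrack_def)
next
  case False
  hence j1: "1 \<le> j" by simp
  define N where "N = n - j"
  define K :: real where "K = fact (2*n) / fact (2*j-1)"
  have "(\<Sum>i = j..n. real ((2 * n) choose (2 * i)) * bernoulli_num (2 * n - 2 * i)
            * ebrack i (int j)) = (\<Sum>i = j..n. - K * (UU$(2*(i-j)+1) * BB$(2*N - 2*(i-j))))"
  proof (rule sum.cong)
    fix i assume "i \<in> {j..n}"
    thus "real ((2 * n) choose (2 * i)) * bernoulli_num (2 * n - 2 * i) * ebrack i (int j)
       = - K * (UU$(2*(i-j)+1) * BB$(2*N - 2*(i-j)))"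
      using term_eq[OF j1, of i n] unfolding K_def N_def by simp
  qed simp
  also have "\<dots> = (\<Sum>l = 0..N. - K * (UU$(2*l+1) * BB$(2*N - 2*l)))"
  proof -
    have "{j..n} = {0+j..N+j}" using assms N_def by simp
    thus ?thesis by (simp only: sum.shift_bounds_cl_nat_ivl) simp
  qed
  also have "\<dots> = - K * (- UU$(2*N) / 2)"
  proof -
    have "(\<Sum>l = 0..N. - K * (UU$(2*l+1) * BB$(2*N - 2*l))) = - K * (\<Sum>l = 0..N. UU$(2*l+1) * BB$(2*N - 2*l))"
      by (rule sum_distrib_left[symmetric])
    thus ?thesis by (simp only: key_sum)
  qed
  also have "\<dots> = (if j < n then 0 else real n)"
  proof (cases "j < n")
    case True
    hence "UU $ (2*N) = 0" using N_def by (intro UU_even) auto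
    thus ?thesis using True by simp
  next
    case False
    hence jn: "j = n" using assms by simp
    hence "N = 0" using N_def by simp
    have "fact (2*n) = (2*n) * (fact (2*n-1) :: real)"
      using j1 jn by (simp add: fact_reduce)
    thus ?thesis using jn \<open>N = 0\<close> UU_0 j1 unfolding K_def by simp
  qed
  finally show ?thesis .
qed

end
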